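(* Let $D$ be a squarefree integer and let $p>3$ be a prime dividing $D$. Then $C_D(\mathbb{Q}_p)\neq\emptyset$ if and only if $p\equiv1\pmod{24}$.
   Context: $C_D\subset\mathbb{P}^4$ is the curve over $\mathbb{Q}$ given by $X_0^2-2X_1^2+X_2^2=0$, $X_1^2-2X_2^2+DX_3^2=0$, $X_2^2-2DX_3^2+X_4^2=0$. *)

theory Defs
  imports "HOL-Number_Theory.Number_Theory" "HOL-Computational_Algebra.Squarefree"
begin

text \<open>p-adic integers as the inverse limit of Z/p^k Z: an element is represented by a
  sequence a with a k read modulo p^k and compatibility a (k+1) = a k mod p^k.\<close>
definition padic_integer :: "nat \<Rightarrow> (nat \<Rightarrow> int) \<Rightarrow> bool" where
  "padic_integer p a \<longleftrightarrow> (\<forall>k. [a (Suc k) = a k] (mod (int p ^ k)))"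

text \<open>C_D(Q_p) is nonempty iff there is a point of P^4(Q_p) on C_D; every point of
  P^4(Q_p) has a primitive representative in Z_p^5 (some coordinate a unit), and a
  polynomial identity with integer coefficients holds in Z_p iff it holds mod p^k for all k.\<close>
definition C_D_has_Qp_point :: "int \<Rightarrow> nat \<Rightarrow> bool" where
  "C_D_has_Qp_point D p \<longleftrightarrow>
     (\<exists>x :: nat \<Rightarrow> nat \<Rightarrow> int.
        (\<forall>i<5. padic_integer p (x i)) \<and>
        (\<exists>i<5. \<not> int p dvd x i 1) \<and>
        (\<forall>k. [(x 0 k)^2 - 2 * (x 1 k)^2 + (x 2 k)^2 = 0] (mod (int p ^ k)) \<and>
             [(x 1 k)^2 - 2 * (x 2 k)^2 + D * (x 3 k)^2 = 0] (mod (int p ^ k)) \<and>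
             [(x 2 k)^2 - 2 * D * (x 3 k)^2 + (x 4 k)^2 = 0] (mod (int p ^ k))))"

end

theory Submission
  imports Defs "HOL-Number_Theory.Number_Theory"
begin


lemma div8_lemma: "(d::nat) dvd 8 \<Longrightarrow> \<not> d dvd 4 \<Longrightarrow> d = 8"
proof -
  assume a: "d dvd 8" "\<not> d dvd 4"
  have "d \<le> 8" using a(1) by (simp add: dvd_imp_le)
  hence "d \<in> {0,1,2,3,4,5,6,7,8}" by auto
  thus ?thesis using a by auto
qed

lemma div3_lemma: "(d::nat) dvd 3 \<Longrightarrow> d \<noteq> 1 \<Longrightarrow> d = 3"
proof -
  assume a: "d dvd 3" "d \<noteq> 1"
  have "d \<le> 3" using a(1) by (simp add: dvd_imp_le)
  hence "d \<in> {0,1,2,3}" by auto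
  thus ?thesis using a by auto
qed

lemma ord_helper:
  assumes "p > 0"
  shows "[z^n = 1] (mod int p) \<longleftrightarrow> [nat (z mod int p) ^ n = 1] (mod p)"
proof -
  have e: "int (nat (z mod int p)) = z mod int p" using assms by simp
  have "[nat (z mod int p) ^ n = 1] (mod p) \<longleftrightarrow> [int (nat (z mod int p)) ^ n = int 1] (mod int p)"
    by (metis cong_int_iff of_nat_power)
  also have "\<dots> \<longleftrightarrow> [(z mod int p)^n = 1] (mod int p)" using e by simp
  also have "\<dots> \<longleftrightarrow> [z^n = 1] (mod int p)" by (simp add: cong_def power_mod)
  finally show ?thesis by simp
qed

lemma small_prime_dvd:
  assumes "prime p" "p > 3" "int p dvd 12"
  shows False
proof -
  have "int p dvd int 12" using assms(3) by simp
  hence "p dvd 12" by (simp only: int_dvd_int_iff)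
  hence "p dvd 4 * 3" by simp
  hence "p dvd 4 \<or> p dvd 3" using assms(1) prime_dvd_mult_iff by blast
  moreover have "p dvd 4 \<Longrightarrow> p dvd 2" using assms(1) prime_dvd_mult_iff[of p 2 2] by simp
  ultimately have "p dvd 2 \<or> p dvd 3" by blast
  hence "p \<le> 3" by (auto dest: dvd_imp_le)
  thus False using assms(2) by simp
qed
lemma ord8:
  fixes z :: int
  assumes "prime p" "p > 3" "int p dvd z^4 + 1"
  shows "8 dvd p - 1"
proof -
  define w where "w = nat (z mod int p)"
  have p0: "p > 0" using assms by simp
  have "z^8 - 1 = (z^4+1)*(z^4-1)" by (simp add: algebra_simps eval_nat_numeral)
  hence "int p dvd z^8 - 1" using assms(3) by simp
  hence "[z^8 = 1] (mod int p)" by (simp add: cong_iff_dvd_diff)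
  hence "[w^8 = 1] (mod p)" using ord_helper[OF p0] w_def by blast
  hence d8: "ord p w dvd 8" by (simp add: ord_divides')
  have n4: "\<not> ord p w dvd 4"
  proof
    assume "ord p w dvd 4"
    hence "[w^4 = 1] (mod p)" by (simp add: ord_divides')
    hence "[z^4 = 1] (mod int p)" using ord_helper[OF p0] w_def by blast
    hence "int p dvd z^4 - 1" by (simp add: cong_iff_dvd_diff)
    with assms(3) have "int p dvd (z^4+1) - (z^4-1)" by (rule dvd_diff)
    hence "int p dvd 2" by simp
    hence "int p dvd 12" using dvd_trans[of "int p" 2 12] by simp
    thus False using small_prime_dvd assms by blast
  qed
  have o8: "ord p w = 8" using div8_lemma d8 n4 by blast
  hence "coprime p w" using ord_gt_0_iff by (metis zero_less_numeral)
  hence "ord p w dvd totient p" by (rule order_divides_totient)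
  thus ?thesis using o8 totient_prime[OF assms(1)] by simp
qed

lemma ord3:
  fixes z :: int
  assumes "prime p" "int p dvd z^2 + z + 1" "\<not> int p dvd z - 1"
  shows "3 dvd p - 1"
proof -
  define w where "w = nat (z mod int p)"
  have p0: "p > 0" using assms prime_gt_0_nat by blast
  have "z^3 - 1 = (z^2+z+1)*(z-1)" by (simp add: algebra_simps eval_nat_numeral)
  hence "int p dvd z^3 - 1" using assms(2) by simp
  hence "[z^3 = 1] (mod int p)" by (simp add: cong_iff_dvd_diff)
  hence "[w^3 = 1] (mod p)" using ord_helper[OF p0] w_def by blast
  hence d3: "ord p w dvd 3" by (simp add: ord_divides')
  have n1: "ord p w \<noteq> 1"
  proof
    assume "ord p w = 1"
    hence "[w^1 = 1] (mod p)" using ord_eq_Suc_0_iff by simp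
    hence "[z^1 = 1] (mod int p)" using ord_helper[OF p0] w_def by blast
    hence "int p dvd z - 1" by (simp add: cong_iff_dvd_diff)
    thus False using assms(3) by simp
  qed
  have o3: "ord p w = 3" using div3_lemma d3 n1 by blast
  hence "coprime p w" using ord_gt_0_iff by (metis zero_less_numeral)
  hence "ord p w dvd totient p" by (rule order_divides_totient)
  thus ?thesis using o3 totient_prime[OF assms(1)] by simp
qed



lemma roots_imp_24:
  fixes i s t :: int
  assumes p: "prime p" "p > 3"
    and I: "int p dvd i^2 + 1" and S: "int p dvd s^2 - 2" and T: "int p dvd t^2 - 3"
  shows "[p = 1] (mod 24)"
proof -
  define P where "P = int p"
  have "odd p" using p prime_odd_nat by simp
  hence Podd: "odd P" unfolding P_def by simp
  then obtain k where k: "P = 2*k+1" using oddE by blast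
  define h where "h = k + 1"
  have h: "2*h = P + 1" using k h_def by simp
  have H: "P dvd 2*h - 1" using h by simp
  have I': "P dvd i^2+1" and S': "P dvd s^2 - 2" and T': "P dvd t^2 - 3"
    using I S T unfolding P_def by auto
  define zz where "zz = (1+i)*s*h"
  have e1: "zz^2 - i = (i^2+1)*(s^2*h^2) + (s^2-2)*(2*i*h^2) + (2*h-1)*(i*(2*h+1))"
    unfolding zz_def by (simp add: algebra_simps eval_nat_numeral)
  have "P dvd (i^2+1)*(s^2*h^2) + (s^2-2)*(2*i*h^2) + (2*h-1)*(i*(2*h+1))"
    using I' S' H by (meson dvd_add dvd_mult2)
  hence A: "P dvd zz^2 - i" by (simp only: e1)
  have e2: "zz^4 + 1 = (zz^2 - i)*(zz^2+i) + (i^2+1)"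
    by (simp add: algebra_simps eval_nat_numeral)
  have "P dvd (zz^2 - i)*(zz^2+i) + (i^2+1)" using A I' by (meson dvd_add dvd_mult2)
  hence "P dvd zz^4 + 1" by (simp only: e2)
  hence d8: "8 dvd p - 1" using ord8 p unfolding P_def by blast
  define u where "u = t*i - 1"
  define w where "w = u*h"
  have e3: "4*(w^2+w+1) = (2*h-1)*(u^2*(2*h+1)+2*u) + (i^2+1)*t^2 - (t^2-3)"
    unfolding w_def u_def by (simp add: algebra_simps eval_nat_numeral)
  have "P dvd (2*h-1)*(u^2*(2*h+1)+2*u) + (i^2+1)*t^2 - (t^2-3)"
    using I' T' H by (meson dvd_add dvd_diff dvd_mult2)
  hence "P dvd 4*(w^2+w+1)" by (simp only: e3)
  moreover have "\<not> P dvd 4"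
  proof
    assume "P dvd 4"
    hence "P dvd 12" using dvd_trans[of P 4 12] by simp
    thus False using small_prime_dvd p unfolding P_def by blast
  qed
  moreover have "prime P" using p unfolding P_def by simp
  ultimately have W1: "P dvd w^2+w+1" using prime_dvd_mult_iff by blast
  have W2: "\<not> P dvd w - 1"
  proof
    assume a: "P dvd w - 1"
    have e4: "t*i - 3 = 2*(w-1) - (2*h-1)*u" unfolding w_def u_def by (simp add: algebra_simps)
    have "P dvd 2*(w-1) - (2*h-1)*u" using a H by (meson dvd_diff dvd_mult dvd_mult2)
    hence ti: "P dvd t*i - 3" by (simp only: e4)
    have e5: "12 = (i^2+1)*t^2 - (t^2-3) - (t*i-3)*(t*i+3)"
      by (simp add: algebra_simps eval_nat_numeral)
    have "P dvd (i^2+1)*t^2 - (t^2-3) - (t*i-3)*(t*i+3)" using I' T' ti by (meson dvd_diff dvd_mult2)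
    hence "P dvd 12" by (simp only: e5[symmetric])
    thus False using small_prime_dvd p unfolding P_def by blast
  qed
  have d3: "3 dvd p - 1" using ord3 p W1 W2 unfolding P_def by blast
  have "24 dvd p - 1" using d8 d3 by presburger
  thus ?thesis using p by (simp add: cong_altdef_nat)
qed

lemma qr24:
  assumes p: "prime p" and c: "[p = 1] (mod 24)"
  shows "\<exists>i s t :: int. int p dvd i^2 + 1 \<and> int p dvd s^2 - 2 \<and> int p dvd t^2 - 3"
proof -
  have p1: "p > 1" using p prime_gt_1_nat by blast
  have "24 dvd p - 1" using c p1 by (simp add: cong_altdef_nat)
  then obtain e where e: "p - 1 = 24*e" by (auto simp: dvd_def)
  have e0: "e > 0" using p1 e by (cases e) auto
  obtain g where g: "residue_primroot p g" using prime_primitive_root_exists[OF p1 p] by blast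
  have og: "ord p g = 24*e" using g e by (simp add: residue_primroot_def totient_prime p)
  define zn where "zn = g^e"
  have c24: "[zn^24 = 1] (mod p)" unfolding zn_def
    by (simp add: ord_divides' og power_mult[symmetric] mult.commute)
  have c12: "\<not> [zn^12 = 1] (mod p)"
  proof
    assume "[zn^12 = 1] (mod p)"
    hence "ord p g dvd e*12" unfolding zn_def by (simp add: ord_divides' power_mult[symmetric])
    hence "24*e \<le> e*12" using og e0 by (metis dvd_imp_le mult_pos_pos zero_less_numeral)
    thus False using e0 by simp
  qed
  have c8: "\<not> [zn^8 = 1] (mod p)"
  proof
    assume "[zn^8 = 1] (mod p)"
    hence "ord p g dvd e*8" unfolding zn_def by (simp add: ord_divides' power_mult[symmetric])
    hence "24*e \<le> e*8" using og e0 by (metis dvd_imp_le mult_pos_pos zero_less_numeral)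
    thus False using e0 by simp
  qed
  define z where "z = int zn"
  have tr: "[zn^k = 1] (mod p) \<longleftrightarrow> int p dvd z^k - 1" for k
    unfolding z_def by (metis cong_int_iff cong_iff_dvd_diff of_nat_1 of_nat_power)
  have P: "prime (int p)" using p by simp
  have z24: "int p dvd z^24 - 1" using c24 tr by blast
  have z12: "\<not> int p dvd z^12 - 1" using c12 tr by blast
  have z8: "\<not> int p dvd z^8 - 1" using c8 tr by blast
  have "z^24 - 1 = (z^12-1)*(z^12+1)" by (simp add: algebra_simps eval_nat_numeral)
  hence A: "int p dvd z^12+1" using z24 z12 P prime_dvd_mult_iff by metis
  have "z^24 - 1 = (z^8-1)*(z^16+z^8+1)" by (simp add: algebra_simps eval_nat_numeral)
  hence B: "int p dvd z^16+z^8+1" using z24 z8 P prime_dvd_mult_iff by metis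
  have "(z^6)^2 + 1 = z^12+1" by (simp add: power_mult[symmetric])
  hence I: "int p dvd (z^6)^2 + 1" using A by simp
  have "(z^3+z^21)^2 - 2 = (z^12+1)*(z^6 + 2*(z^12-1) + z^18*(z^12-1))"
    by (simp add: power2_eq_square algebra_simps flip: power_add)
  hence S: "int p dvd (z^3+z^21)^2 - 2" using A by simp
  have "(z^6*(2*z^8+1))^2 - 3 = 4*z^12*(z^16+z^8+1) - 3*(z^12+1)"
    by (simp add: power2_eq_square algebra_simps flip: power_add)
  hence T: "int p dvd (z^6*(2*z^8+1))^2 - 3" using A B by (metis dvd_diff dvd_mult)
  show ?thesis using I S T by blast
qed

lemma hensel_step:
  fixes P a t :: int and n :: nat
  assumes P: "prime P" "\<not> P dvd 2" and n: "n \<ge> 1" and d: "P^n dvd t^2 - a" and nt: "\<not> P dvd t"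
  shows "\<exists>t'. P^n dvd t' - t \<and> P^(Suc n) dvd t'^2 - a"
proof -
  obtain m where m: "t^2 - a = P^n * m" using d by (auto simp: dvd_def)
  have "\<not> P dvd 2*t" using P nt prime_dvd_mult_iff by blast
  hence "coprime P (2*t)" using P prime_imp_coprime by blast
  hence "coprime (2*t) P" by (simp add: coprime_commute)
  then obtain y where y: "[2*t*y = 1] (mod P)" using cong_solve_coprime_int by blast
  hence y': "P dvd 2*t*y - 1" by (simp add: cong_iff_dvd_diff)
  define c where "c = - m * y"
  have "m + 2*t*c = - m * (2*t*y - 1)" unfolding c_def by (simp add: algebra_simps)
  hence "P dvd m + 2*t*c" using y' by simp
  then obtain q where q: "m + 2*t*c = P*q" by (auto simp: dvd_def)
  obtain r where r: "n = Suc r" using n by (cases n) auto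
  have "(t + c*P^n)^2 - a = (t^2 - a) + P^n*(2*t*c) + c^2*P^n*P^n"
    by (simp add: algebra_simps power2_eq_square)
  also have "\<dots> = P^n*(m + 2*t*c) + c^2*P^n*P^n" using m by (simp add: algebra_simps)
  also have "\<dots> = P^(Suc n) * (q + c^2 * P^r)" using q r by (simp add: algebra_simps)
  finally have "P^(Suc n) dvd (t + c*P^n)^2 - a" by simp
  moreover have "P^n dvd (t + c*P^n) - t" by simp
  ultimately show ?thesis by blast
qed



lemma hensel_seq:
  fixes a r :: int
  assumes p: "prime p" "p > 3" and na: "\<not> int p dvd a" and r: "int p dvd r^2 - a"
  shows "\<exists>s. padic_integer p s \<and> (\<forall>k. [s k ^ 2 = a] (mod (int p ^ k)))"
proof -
  define P where "P = int p"
  have Pp: "prime P" using p unfolding P_def by simp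
  have P2: "\<not> P dvd 2"
  proof
    assume "P dvd 2"
    hence "P dvd 12" using dvd_trans[of P 2 12] by simp
    thus False using small_prime_dvd p unfolding P_def by blast
  qed
  define T where "T = rec_nat r (\<lambda>k t. SOME t'. P^(Suc k) dvd t' - t \<and> P^(Suc (Suc k)) dvd t'^2 - a)"
  have T0: "T 0 = r" unfolding T_def by simp
  have TS: "T (Suc k) = (SOME t'. P^(Suc k) dvd t' - T k \<and> P^(Suc (Suc k)) dvd t'^2 - a)" for k
    unfolding T_def by simp
  have ex: "\<exists>t'. P^(Suc k) dvd t' - T k \<and> P^(Suc (Suc k)) dvd t'^2 - a"
    if h: "P^(Suc k) dvd T k ^2 - a" for k
  proof -
    have nt: "\<not> P dvd T k"
    proof
      assume "P dvd T k"
      hence "P dvd T k ^ 2" by (simp add: power2_eq_square)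
      moreover have "P dvd T k ^2 - a" using h dvd_trans[of P "P^Suc k"] by simp
      ultimately have "P dvd T k ^ 2 - (T k ^ 2 - a)" by (rule dvd_diff)
      thus False using na unfolding P_def by simp
    qed
    show ?thesis using hensel_step[OF Pp P2 _ h nt] by simp
  qed
  have inv: "P^(Suc k) dvd T k ^2 - a" for k
  proof (induction k)
    case 0 thus ?case using r T0 unfolding P_def by simp
  next
    case (Suc k)
    show ?case unfolding TS using someI_ex[OF ex[OF Suc]] by blast
  qed
  have comp: "P^(Suc k) dvd T (Suc k) - T k" for k
    unfolding TS using someI_ex[OF ex[OF inv[of k]]] by blast
  have "padic_integer p T" unfolding padic_integer_def
  proof
    fix k
    have "P^k dvd T (Suc k) - T k" using comp[of k] dvd_trans[of "P^k" "P^Suc k"] le_imp_power_dvd[of k "Suc k" P] by simp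
    thus "[T (Suc k) = T k] (mod int p ^ k)" unfolding P_def by (simp add: cong_iff_dvd_diff)
  qed
  moreover have "[T k ^ 2 = a] (mod (int p ^ k))" for k
  proof -
    have "P^k dvd T k ^2 - a" using inv[of k] dvd_trans[of "P^k" "P^Suc k"] le_imp_power_dvd[of k "Suc k" P] by simp
    thus ?thesis unfolding P_def by (simp add: cong_iff_dvd_diff)
  qed
  ultimately show ?thesis by blast
qed



lemma dvd_sq: "(P::int) dvd y \<Longrightarrow> P dvd y^2" by (simp add: power2_eq_square)

lemma forward:
  fixes D :: int and p :: nat
  assumes sq: "squarefree D" and p: "prime p" "p > 3" and pD: "int p dvd D"
    and h: "C_D_has_Qp_point D p"
  shows "[p = 1] (mod 24)"
proof -
  define P where "P = int p"
  have Pp: "prime P" using p unfolding P_def by simp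
  obtain x :: "nat \<Rightarrow> nat \<Rightarrow> int" where
    pa: "\<forall>i<5. padic_integer p (x i)" and prim: "\<exists>i<5. \<not> int p dvd x i 1" and
    eqs: "\<forall>k. [(x 0 k)^2 - 2 * (x 1 k)^2 + (x 2 k)^2 = 0] (mod (int p ^ k)) \<and>
             [(x 1 k)^2 - 2 * (x 2 k)^2 + D * (x 3 k)^2 = 0] (mod (int p ^ k)) \<and>
             [(x 2 k)^2 - 2 * D * (x 3 k)^2 + (x 4 k)^2 = 0] (mod (int p ^ k))"
    using h unfolding C_D_has_Qp_point_def by blast
  define a where "a = (\<lambda>i. x i 1)"
  have E1: "P dvd (a 0)^2 - 2*(a 1)^2 + (a 2)^2" and E2: "P dvd (a 1)^2 - 2*(a 2)^2 + D*(a 3)^2"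
   and E3: "P dvd (a 2)^2 - 2*D*(a 3)^2 + (a 4)^2"
    using eqs[rule_format, of 1] unfolding a_def P_def by (auto simp: cong_iff_dvd_diff)
  have PD: "P dvd D" using pD unfolding P_def .
  show ?thesis
  proof (cases "P dvd a 2")
    case True
    have "P dvd (a 1)^2"
    proof -
      have e: "(a 1)^2 = ((a 1)^2 - 2*(a 2)^2 + D*(a 3)^2) + 2*(a 2)^2 - D*(a 3)^2" by simp
      have "P dvd ((a 1)^2 - 2*(a 2)^2 + D*(a 3)^2) + 2*(a 2)^2 - D*(a 3)^2"
        using dvd_diff[OF dvd_add[OF E2 dvd_mult[OF dvd_sq[OF True], of 2]] dvd_mult2[OF PD, of "(a 3)^2"]] .
      thus ?thesis by (simp only: e[symmetric])
    qed
    hence d1: "P dvd a 1" using prime_dvd_power[OF Pp] by blast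
    have "P dvd (a 4)^2"
    proof -
      have e: "(a 4)^2 = ((a 2)^2 - 2*D*(a 3)^2 + (a 4)^2) - (a 2)^2 + 2*D*(a 3)^2" by simp
      have "P dvd ((a 2)^2 - 2*D*(a 3)^2 + (a 4)^2) - (a 2)^2 + 2*D*(a 3)^2"
        using dvd_add[OF dvd_diff[OF E3 dvd_sq[OF True]] dvd_mult2[OF dvd_mult[OF PD, of 2], of "(a 3)^2"]] .
      thus ?thesis by (simp only: e[symmetric])
    qed
    hence d4: "P dvd a 4" using prime_dvd_power[OF Pp] by blast
    have "P dvd (a 0)^2"
    proof -
      have e: "(a 0)^2 = ((a 0)^2 - 2*(a 1)^2 + (a 2)^2) + 2*(a 1)^2 - (a 2)^2" by simp
      have "P dvd ((a 0)^2 - 2*(a 1)^2 + (a 2)^2) + 2*(a 1)^2 - (a 2)^2"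
        using dvd_diff[OF dvd_add[OF E1 dvd_mult[OF dvd_sq[OF d1], of 2]] dvd_sq[OF True]] .
      thus ?thesis by (simp only: e[symmetric])
    qed
    hence d0: "P dvd a 0" using prime_dvd_power[OF Pp] by blast
    obtain j where j: "j < 5" "\<not> P dvd a j" using prim unfolding a_def P_def by blast
    have j0: "j \<noteq> 0" proof assume "j = 0" thus False using j(2) d0 by simp qed
    have j1: "j \<noteq> 1" proof assume "j = 1" thus False using j(2) d1 by simp qed
    have j2: "j \<noteq> 2" proof assume "j = 2" thus False using j(2) True by simp qed
    have j4: "j \<noteq> 4" proof assume "j = 4" thus False using j(2) d4 by simp qed
    hence "j = 3" using j(1) j0 j1 j2 j4 by linarith
    hence n3: "\<not> P dvd a 3" using j by simp
    define b where "b = (\<lambda>i. x i 2)"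
    have ba: "P dvd b i - a i" if "i < 5" for i
    proof -
      have "[x i (Suc 1) = x i 1] (mod (int p ^ 1))" using pa that unfolding padic_integer_def by blast
      thus ?thesis unfolding a_def b_def P_def by (simp add: cong_iff_dvd_diff numeral_2_eq_2)
    qed
    have ba1: "P dvd b 1 - a 1" and ba2: "P dvd b 2 - a 2" using ba[of 1] ba[of 2] by simp_all
    have b1: "P dvd b 1" using dvd_add[OF ba1 d1] by simp
    have b2: "P dvd b 2" using dvd_add[OF ba2 True] by simp
    have b3: "\<not> P dvd b 3"
    proof
      assume "P dvd b 3"
      moreover have "P dvd b 3 - a 3" using ba[of 3] by simp
      ultimately have "P dvd b 3 - (b 3 - a 3)" by (rule dvd_diff)
      thus False using n3 by simp
    qed
    have E2': "P^2 dvd (b 1)^2 - 2*(b 2)^2 + D*(b 3)^2"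
      using eqs[rule_format, of 2] unfolding b_def P_def by (auto simp: cong_iff_dvd_diff)
    have "P^2 dvd (b 1)^2" "P^2 dvd (b 2)^2" using b1 b2 by (simp_all add: dvd_power_same)
    hence "P^2 dvd ((b 1)^2 - 2*(b 2)^2 + D*(b 3)^2) - (b 1)^2 + 2*(b 2)^2"
      using E2' by (meson dvd_add dvd_diff dvd_mult)
    hence "P^2 dvd D*(b 3)^2" by simp
    moreover have "coprime (P^2) ((b 3)^2)"
      using b3 Pp prime_imp_coprime by (metis coprime_power_left_iff coprime_power_right_iff)
    ultimately have "P^2 dvd D" using coprime_dvd_mult_left_iff by blast
    hence "is_unit P" using sq unfolding squarefree_def by blast
    thus ?thesis using Pp not_prime_unit by blast
  next
    case False
    have "coprime (a 2) P" using False Pp prime_imp_coprime coprime_commute by blast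
    then obtain v where v: "[a 2 * v = 1] (mod P)" using cong_solve_coprime_int by blast
    hence V: "P dvd a 2 * v - 1" by (simp add: cong_iff_dvd_diff)
    define i where "i = a 4 * v"
    define s where "s = a 1 * v"
    define t where "t = a 0 * v"
    have ei: "i^2 + 1 = ((a 2)^2 - 2*D*(a 3)^2 + (a 4)^2)*v^2 + D*(2*(a 3)^2*v^2) - (a 2 * v - 1)*(a 2 * v + 1)"
      unfolding i_def by (simp add: algebra_simps power2_eq_square)
    have "P dvd ((a 2)^2 - 2*D*(a 3)^2 + (a 4)^2)*v^2 + D*(2*(a 3)^2*v^2) - (a 2 * v - 1)*(a 2 * v + 1)"
      using E3 PD V by (meson dvd_add dvd_diff dvd_mult2)
    hence I: "P dvd i^2 + 1" by (simp only: ei)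
    have es: "s^2 - 2 = ((a 1)^2 - 2*(a 2)^2 + D*(a 3)^2)*v^2 - D*((a 3)^2*v^2) + (a 2 * v - 1)*(2*(a 2 * v + 1))"
      unfolding s_def by (simp add: algebra_simps power2_eq_square)
    have "P dvd ((a 1)^2 - 2*(a 2)^2 + D*(a 3)^2)*v^2 - D*((a 3)^2*v^2) + (a 2 * v - 1)*(2*(a 2 * v + 1))"
      using E2 PD V by (meson dvd_add dvd_diff dvd_mult2)
    hence S: "P dvd s^2 - 2" by (simp only: es)
    have et: "t^2 - 3 = ((a 0)^2 - 2*(a 1)^2 + (a 2)^2)*v^2 + (s^2 - 2)*2 - (a 2 * v - 1)*(a 2 * v + 1)"
      unfolding t_def s_def by (simp add: algebra_simps power2_eq_square)
    have "P dvd ((a 0)^2 - 2*(a 1)^2 + (a 2)^2)*v^2 + (s^2 - 2)*2 - (a 2 * v - 1)*(a 2 * v + 1)"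
      using E1 S V by (meson dvd_add dvd_diff dvd_mult2)
    hence T: "P dvd t^2 - 3" by (simp only: et)
    show ?thesis using roots_imp_24[OF p] I S T unfolding P_def by blast
  qed
qed

lemma backward:
  fixes D :: int and p :: nat
  assumes p: "prime p" "p > 3" and c: "[p = 1] (mod 24)"
  shows "C_D_has_Qp_point D p"
proof -
  obtain i s t :: int where I: "int p dvd i^2 + 1" and S: "int p dvd s^2 - 2" and T: "int p dvd t^2 - 3"
    using qr24[OF p(1) c] by blast
  have nd: "\<not> int p dvd c" if "c \<in> {-1, 2, 3}" for c :: int
  proof
    assume "int p dvd c"
    moreover have "c dvd 12" using that by auto
    ultimately have "int p dvd 12" by (rule dvd_trans)
    thus False using small_prime_dvd p by blast
  qed
  obtain sm where sm: "padic_integer p sm" "\<forall>k. [sm k ^ 2 = -1] (mod (int p ^ k))"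
    using hensel_seq[OF p, of "-1" i] nd[of "-1"] I by auto
  obtain s2 where s2: "padic_integer p s2" "\<forall>k. [s2 k ^ 2 = 2] (mod (int p ^ k))"
    using hensel_seq[OF p, of 2 s] nd[of 2] S by auto
  obtain s3 where s3: "padic_integer p s3" "\<forall>k. [s3 k ^ 2 = 3] (mod (int p ^ k))"
    using hensel_seq[OF p, of 3 t] nd[of 3] T by auto
  define x :: "nat \<Rightarrow> nat \<Rightarrow> int" where
    "x = (\<lambda>j k. if j = 0 then s3 k else if j = 1 then s2 k else if j = 2 then 1
                else if j = 3 then 0 else sm k)"
  have x0: "x 0 = s3" and x1: "x 1 = s2" and x2: "x 2 = (\<lambda>k. 1)" and x3: "x 3 = (\<lambda>k. 0)"
    and x4: "x 4 = sm" unfolding x_def by (auto simp: fun_eq_iff)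
  have pa: "\<forall>j<5. padic_integer p (x j)"
  proof (intro allI impI)
    fix j :: nat assume "j < 5"
    hence "j = 0 \<or> j = 1 \<or> j = 2 \<or> j = 3 \<or> j = 4" by linarith
    thus "padic_integer p (x j)" using sm s2 s3 x0 x1 x2 x3 x4
      by (auto simp: padic_integer_def)
  qed
  have pr: "\<exists>j<5. \<not> int p dvd x j 1"
    using x2 p by (intro exI[of _ 2]) auto
  have eq: "[(x 0 k)^2 - 2 * (x 1 k)^2 + (x 2 k)^2 = 0] (mod (int p ^ k)) \<and>
             [(x 1 k)^2 - 2 * (x 2 k)^2 + D * (x 3 k)^2 = 0] (mod (int p ^ k)) \<and>
             [(x 2 k)^2 - 2 * D * (x 3 k)^2 + (x 4 k)^2 = 0] (mod (int p ^ k))" for k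
  proof -
    have A: "int p ^ k dvd s3 k ^ 2 - 3" "int p ^ k dvd s2 k ^ 2 - 2" "int p ^ k dvd sm k ^ 2 + 1"
      using sm(2) s2(2) s3(2) by (auto simp: cong_iff_dvd_diff)
    have "s3 k ^ 2 - 2 * s2 k ^ 2 + 1 = (s3 k ^ 2 - 3) - 2 * (s2 k ^ 2 - 2)" by simp
    hence "int p ^ k dvd s3 k ^ 2 - 2 * s2 k ^ 2 + 1" using A by (metis dvd_diff dvd_mult)
    moreover have "int p ^ k dvd 1 + sm k ^ 2" using A(3) by (simp add: add.commute)
    ultimately show ?thesis using A by (simp add: cong_iff_dvd_diff x_def)
  qed
  show ?thesis unfolding C_D_has_Qp_point_def using pa pr eq by blast
qed

theorem lemma4p5:
  fixes D :: int and p :: nat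
  assumes "squarefree D" and "prime p" and "p > 3" and "int p dvd D"
  shows "C_D_has_Qp_point D p \<longleftrightarrow> [p = 1] (mod 24)"
  using forward[OF assms] backward[OF assms(2,3)] by blast

end
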